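(* Let $f,g\colon\mathbb R\to\mathbb R$ be smooth functions with $f'(x)g'(y)<0$ and $f(x)\neq g(y)$ for all $(x,y)\in\mathbb R^2$, and let $\epsilon>0$. Define \[ h_\epsilon(x,t)=-\frac{(f(u_-+\epsilon)-g(u_++\epsilon))(f(u_--\epsilon)-g(u_+-\epsilon))}{(f(u_-+\epsilon)-f(u_--\epsilon))(g(u_++\epsilon)-g(u_+-\epsilon))},\qquad u_\pm=x\pm t . \] Then for all $(x,t)\in\mathbb R^2$ \[ h_\epsilon(x,t+\epsilon)\,h_\epsilon(x,t-\epsilon)=\bigl(1+h_\epsilon(x+\epsilon,t)\bigr)\bigl(1+h_\epsilon(x-\epsilon,t)\bigr), \] so that $\chi_{m,n}:=h_\epsilon(m\epsilon,n\epsilon)$, $(m,n)\in\mathbb Z^2$, solves the discrete Liouville equation $\chi_{m,n-1}\chi_{m,n+1}=(1+\chi_{m-1,n})(1+\chi_{m+1,n})$. Moreover $\ell(x,t)=\lim_{\epsilon\to0}\epsilon^2h_\epsilon(x,t)$ exists and $e^{\phi(x,t)}:=1/\ell(x,t)$ is given by $e^{\phi}=-4\,f'(u_-)g'(u_+)/(f(u_-)-g(u_+))^2$, which solves $\partial_t^2\phi-\partial_x^2\phi=-2e^{\phi}$. *)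

theory Defs
  imports "HOL-Analysis.Analysis"
begin

definition smooth_fun :: "(real \<Rightarrow> real) \<Rightarrow> bool" where
  "smooth_fun f \<longleftrightarrow> (\<forall>n. \<forall>x. ((deriv ^^ n) f) differentiable (at x))"

definition hfun :: "(real \<Rightarrow> real) \<Rightarrow> (real \<Rightarrow> real) \<Rightarrow> real \<Rightarrow> real \<Rightarrow> real \<Rightarrow> real" where
  "hfun f g \<epsilon> x t =
     - ((f (x - t + \<epsilon>) - g (x + t + \<epsilon>)) * (f (x - t - \<epsilon>) - g (x + t - \<epsilon>)))
     / ((f (x - t + \<epsilon>) - f (x - t - \<epsilon>)) * (g (x + t + \<epsilon>) - g (x + t - \<epsilon>)))"

end

theory Submission
  imports Defs
begin


lemma ident:
  fixes F2 F0 Fm G2 G0 Gm :: real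
  assumes "F2\<noteq>F0" "F0\<noteq>Fm" "G2\<noteq>G0" "G0\<noteq>Gm"
  shows "(- ((F0-G2)*(Fm-G0)) / ((F0-Fm)*(G2-G0))) * (- ((F2-G0)*(F0-Gm)) / ((F2-F0)*(G0-Gm)))
    = (1 + - ((F2-G2)*(F0-G0)) / ((F2-F0)*(G2-G0))) * (1 + - ((F0-G0)*(Fm-Gm)) / ((F0-Fm)*(G0-Gm)))"
proof -
  have a: "F0-Fm \<noteq> 0" "F2-F0\<noteq>0" "G2-G0\<noteq>0" "G0-Gm\<noteq>0" using assms by auto
  have d1: "(F2-F0)*(G2-G0) \<noteq> 0" "(F0-Fm)*(G0-Gm) \<noteq> 0" using a by auto
  have 1: "1 + - ((F2-G2)*(F0-G0)) / ((F2-F0)*(G2-G0)) = - ((F2-G0)*(F0-G2)) / ((F2-F0)*(G2-G0))"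
    using d1 by (subst add_divide_eq_iff) (auto intro: arg_cong2[where f="(/)"] simp: algebra_simps)
  have 2: "1 + - ((F0-G0)*(Fm-Gm)) / ((F0-Fm)*(G0-Gm)) = - ((F0-Gm)*(Fm-G0)) / ((F0-Fm)*(G0-Gm))"
    using d1 by (subst add_divide_eq_iff) (auto intro: arg_cong2[where f="(/)"] simp: algebra_simps)
  show ?thesis unfolding 1 2 times_divide_times_eq
    by (rule arg_cong2[where f="(/)"]; simp add: algebra_simps)
qed

lemma part1:
  fixes f g :: "real \<Rightarrow> real"
  assumes "inj f" "inj g" "\<epsilon> > 0"
  shows "hfun f g \<epsilon> x (t + \<epsilon>) * hfun f g \<epsilon> x (t - \<epsilon>)
              = (1 + hfun f g \<epsilon> (x + \<epsilon>) t) * (1 + hfun f g \<epsilon> (x - \<epsilon>) t)"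
proof -
  define a where "a = x - t"
  define b where "b = x + t"
  have e: "x - (t + \<epsilon>) + \<epsilon> = a" "x - (t + \<epsilon>) - \<epsilon> = a - 2*\<epsilon>"
     "x + (t + \<epsilon>) + \<epsilon> = b + 2*\<epsilon>" "x + (t + \<epsilon>) - \<epsilon> = b"
     "x - (t - \<epsilon>) + \<epsilon> = a + 2*\<epsilon>" "x - (t - \<epsilon>) - \<epsilon> = a"
     "x + (t - \<epsilon>) + \<epsilon> = b" "x + (t - \<epsilon>) - \<epsilon> = b - 2*\<epsilon>"
     "x + \<epsilon> - t + \<epsilon> = a + 2*\<epsilon>" "x + \<epsilon> - t - \<epsilon> = a"
     "x + \<epsilon> + t + \<epsilon> = b + 2*\<epsilon>" "x + \<epsilon> + t - \<epsilon> = b"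
     "x - \<epsilon> - t + \<epsilon> = a" "x - \<epsilon> - t - \<epsilon> = a - 2*\<epsilon>"
     "x - \<epsilon> + t + \<epsilon> = b" "x - \<epsilon> + t - \<epsilon> = b - 2*\<epsilon>"
    by (auto simp: a_def b_def)
  have n: "f (a+2*\<epsilon>) \<noteq> f a" "f a \<noteq> f (a - 2*\<epsilon>)" "g (b+2*\<epsilon>) \<noteq> g b" "g b \<noteq> g (b - 2*\<epsilon>)"
    using assms(3) inj_eq[OF assms(1)] inj_eq[OF assms(2)] by auto
  show ?thesis unfolding hfun_def e by (rule ident[OF n])
qed

lemma chainD:
  assumes "\<And>x. (F has_real_derivative F' x) (at x)" "(h has_real_derivative h') (at s)"
    "E = F' (h s) * h'"
  shows "((\<lambda>s. F (h s)) has_real_derivative E) (at s)"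
  using DERIV_chain2[OF assms(1) assms(2)] assms(3) by simp

lemma symquot:
  assumes "(f has_real_derivative D) (at a)"
  shows "((\<lambda>e. (f (a + e) - f (a - e)) / e) \<longlongrightarrow> 2 * D) (at_right 0)"
proof -
  have d2: "((\<lambda>x. f (a - x)) has_real_derivative -D) (at 0)"
  proof -
    have 1: "(f has_real_derivative D) (at ((\<lambda>x. a - x) 0))" using assms by simp
    have 2: "((\<lambda>x. a - x) has_real_derivative -1) (at 0)" by (auto intro!: derivative_eq_intros)
    show ?thesis using DERIV_chain2[OF 1 2] by simp
  qed
  have l1: "((\<lambda>h. (f (a + h) - f a) / h) \<longlongrightarrow> D) (at 0)"
    using assms unfolding DERIV_def .
  have l2: "((\<lambda>h. (f (a - h) - f a) / h) \<longlongrightarrow> -D) (at 0)"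
    using d2 unfolding DERIV_def by simp
  have "((\<lambda>h. (f (a + h) - f a) / h - (f (a - h) - f a) / h) \<longlongrightarrow> D - -D) (at 0)"
    by (intro tendsto_diff l1 l2)
  hence "((\<lambda>h. (f (a + h) - f a) / h - (f (a - h) - f a) / h) \<longlongrightarrow> 2*D) (at_right 0)"
    using tendsto_mono[OF at_le[of "{0<..}" UNIV "0::real"]] by auto
  moreover have "(\<lambda>h. (f (a + h) - f a) / h - (f (a - h) - f a) / h) = (\<lambda>e. (f (a + e) - f (a - e)) / e)"
    by (rule ext) (simp add: diff_divide_distrib)
  ultimately show ?thesis by simp
qed



lemma pde_t:
  fixes f f1 f2 f3 g g1 g2 g3 :: "real\<Rightarrow>real"
  assumes df: "\<And>x. (f has_real_derivative f1 x) (at x)"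
    and df1: "\<And>x. (f1 has_real_derivative f2 x) (at x)"
    and df2: "\<And>x. (f2 has_real_derivative f3 x) (at x)"
    and dg: "\<And>x. (g has_real_derivative g1 x) (at x)"
    and dg1: "\<And>x. (g1 has_real_derivative g2 x) (at x)"
    and dg2: "\<And>x. (g2 has_real_derivative g3 x) (at x)"
    and neg: "\<And>x y. f1 x * g1 y < 0" and ne: "\<And>x y. f x \<noteq> g y"
  shows "((\<lambda>s. ln (-4 * f1 (x-s) * g1 (x+s)) - ln ((f (x-s) - g (x+s))^2)) has_real_derivative (- f2 (x-s) / f1 (x-s) + g2 (x+s) / g1 (x+s) + 2 * (f1 (x-s) + g1 (x+s)) / (f (x-s) - g (x+s)))) (at s)"
proof -
  have n1: "f1 (x-s) \<noteq> 0" "g1 (x+s) \<noteq> 0" using neg[of "x-s" "x+s"] by auto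
  have n2: "f (x-s) - g (x+s) \<noteq> 0" using ne[of "x-s" "x+s"] by auto
  have p: "-4 * f1 (x-s) * g1 (x+s) > 0" using neg[of "x-s" "x+s"] by auto
  have sq: "0 < (f (x-s) - g (x+s))^2" using n2 by simp
  define F0 where "F0 = f (x-s)"
  define F1 where "F1 = f1 (x-s)"
  define F2 where "F2 = f2 (x-s)"
  define F3 where "F3 = f3 (x-s)"
  define G0 where "G0 = g (x+s)"
  define G1 where "G1 = g1 (x+s)"
  define G2 where "G2 = g2 (x+s)"
  define G3 where "G3 = g3 (x+s)"
  obtain D where hD: "F0 = D + G0" by (metis diff_add_cancel)
  have nz: "F1 \<noteq> 0" "G1 \<noteq> 0" "D \<noteq> 0" using n1 n2 hD unfolding F0_def F1_def G0_def G1_def by auto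
  show ?thesis
    apply (rule derivative_eq_intros chainD[OF df] chainD[OF df1] chainD[OF df2] chainD[OF dg] chainD[OF dg1] chainD[OF dg2] refl p sq n1 n2)+
    unfolding F0_def[symmetric] F1_def[symmetric] F2_def[symmetric] F3_def[symmetric] G0_def[symmetric] G1_def[symmetric] G2_def[symmetric] G3_def[symmetric] hD
    using nz apply (simp add: power2_eq_square)
    using nz apply (simp add: field_simps)
    done
qed

lemma pde_x:
  fixes f f1 f2 f3 g g1 g2 g3 :: "real\<Rightarrow>real"
  assumes df: "\<And>x. (f has_real_derivative f1 x) (at x)"
    and df1: "\<And>x. (f1 has_real_derivative f2 x) (at x)"
    and df2: "\<And>x. (f2 has_real_derivative f3 x) (at x)"
    and dg: "\<And>x. (g has_real_derivative g1 x) (at x)"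
    and dg1: "\<And>x. (g1 has_real_derivative g2 x) (at x)"
    and dg2: "\<And>x. (g2 has_real_derivative g3 x) (at x)"
    and neg: "\<And>x y. f1 x * g1 y < 0" and ne: "\<And>x y. f x \<noteq> g y"
  shows "((\<lambda>y. ln (-4 * f1 (y-t) * g1 (y+t)) - ln ((f (y-t) - g (y+t))^2)) has_real_derivative (f2 (y-t) / f1 (y-t) + g2 (y+t) / g1 (y+t) - 2 * (f1 (y-t) - g1 (y+t)) / (f (y-t) - g (y+t)))) (at y)"
proof -
  have n1: "f1 (y-t) \<noteq> 0" "g1 (y+t) \<noteq> 0" using neg[of "y-t" "y+t"] by auto
  have n2: "f (y-t) - g (y+t) \<noteq> 0" using ne[of "y-t" "y+t"] by auto
  have p: "-4 * f1 (y-t) * g1 (y+t) > 0" using neg[of "y-t" "y+t"] by auto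
  have sq: "0 < (f (y-t) - g (y+t))^2" using n2 by simp
  define F0 where "F0 = f (y-t)"
  define F1 where "F1 = f1 (y-t)"
  define F2 where "F2 = f2 (y-t)"
  define F3 where "F3 = f3 (y-t)"
  define G0 where "G0 = g (y+t)"
  define G1 where "G1 = g1 (y+t)"
  define G2 where "G2 = g2 (y+t)"
  define G3 where "G3 = g3 (y+t)"
  obtain D where hD: "F0 = D + G0" by (metis diff_add_cancel)
  have nz: "F1 \<noteq> 0" "G1 \<noteq> 0" "D \<noteq> 0" using n1 n2 hD unfolding F0_def F1_def G0_def G1_def by auto
  show ?thesis
    apply (rule derivative_eq_intros chainD[OF df] chainD[OF df1] chainD[OF df2] chainD[OF dg] chainD[OF dg1] chainD[OF dg2] refl p sq n1 n2)+
    unfolding F0_def[symmetric] F1_def[symmetric] F2_def[symmetric] F3_def[symmetric] G0_def[symmetric] G1_def[symmetric] G2_def[symmetric] G3_def[symmetric] hD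
    using nz apply (simp add: power2_eq_square)
    using nz apply (simp add: field_simps)
    done
qed

lemma pde_tt:
  fixes f f1 f2 f3 g g1 g2 g3 :: "real\<Rightarrow>real"
  assumes df: "\<And>x. (f has_real_derivative f1 x) (at x)"
    and df1: "\<And>x. (f1 has_real_derivative f2 x) (at x)"
    and df2: "\<And>x. (f2 has_real_derivative f3 x) (at x)"
    and dg: "\<And>x. (g has_real_derivative g1 x) (at x)"
    and dg1: "\<And>x. (g1 has_real_derivative g2 x) (at x)"
    and dg2: "\<And>x. (g2 has_real_derivative g3 x) (at x)"
    and neg: "\<And>x y. f1 x * g1 y < 0" and ne: "\<And>x y. f x \<noteq> g y"
  shows "((\<lambda>s. - f2 (x-s) / f1 (x-s) + g2 (x+s) / g1 (x+s) + 2 * (f1 (x-s) + g1 (x+s)) / (f (x-s) - g (x+s))) has_real_derivative ((f3 (x-s) * f1 (x-s) - f2 (x-s)^2) / f1 (x-s)^2 + (g3 (x+s) * g1 (x+s) - g2 (x+s)^2) / g1 (x+s)^2 + 2 * ((g2 (x+s) - f2 (x-s)) * (f (x-s) - g (x+s)) + (f1 (x-s) + g1 (x+s))^2) / (f (x-s) - g (x+s))^2)) (at s)"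
proof -
  have n1: "f1 (x-s) \<noteq> 0" "g1 (x+s) \<noteq> 0" using neg[of "x-s" "x+s"] by auto
  have n2: "f (x-s) - g (x+s) \<noteq> 0" using ne[of "x-s" "x+s"] by auto
  have p: "-4 * f1 (x-s) * g1 (x+s) > 0" using neg[of "x-s" "x+s"] by auto
  have sq: "0 < (f (x-s) - g (x+s))^2" using n2 by simp
  define F0 where "F0 = f (x-s)"
  define F1 where "F1 = f1 (x-s)"
  define F2 where "F2 = f2 (x-s)"
  define F3 where "F3 = f3 (x-s)"
  define G0 where "G0 = g (x+s)"
  define G1 where "G1 = g1 (x+s)"
  define G2 where "G2 = g2 (x+s)"
  define G3 where "G3 = g3 (x+s)"
  obtain D where hD: "F0 = D + G0" by (metis diff_add_cancel)
  have nz: "F1 \<noteq> 0" "G1 \<noteq> 0" "D \<noteq> 0" using n1 n2 hD unfolding F0_def F1_def G0_def G1_def by auto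
  show ?thesis
    apply (rule derivative_eq_intros chainD[OF df] chainD[OF df1] chainD[OF df2] chainD[OF dg] chainD[OF dg1] chainD[OF dg2] refl p sq n1 n2)+
    unfolding F0_def[symmetric] F1_def[symmetric] F2_def[symmetric] F3_def[symmetric] G0_def[symmetric] G1_def[symmetric] G2_def[symmetric] G3_def[symmetric] hD
    using nz apply (simp add: power2_eq_square)
    using nz apply (simp add: field_simps)
    done
qed

lemma pde_xx:
  fixes f f1 f2 f3 g g1 g2 g3 :: "real\<Rightarrow>real"
  assumes df: "\<And>x. (f has_real_derivative f1 x) (at x)"
    and df1: "\<And>x. (f1 has_real_derivative f2 x) (at x)"
    and df2: "\<And>x. (f2 has_real_derivative f3 x) (at x)"
    and dg: "\<And>x. (g has_real_derivative g1 x) (at x)"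
    and dg1: "\<And>x. (g1 has_real_derivative g2 x) (at x)"
    and dg2: "\<And>x. (g2 has_real_derivative g3 x) (at x)"
    and neg: "\<And>x y. f1 x * g1 y < 0" and ne: "\<And>x y. f x \<noteq> g y"
  shows "((\<lambda>y. f2 (y-t) / f1 (y-t) + g2 (y+t) / g1 (y+t) - 2 * (f1 (y-t) - g1 (y+t)) / (f (y-t) - g (y+t))) has_real_derivative ((f3 (y-t) * f1 (y-t) - f2 (y-t)^2) / f1 (y-t)^2 + (g3 (y+t) * g1 (y+t) - g2 (y+t)^2) / g1 (y+t)^2 - 2 * ((f2 (y-t) - g2 (y+t)) * (f (y-t) - g (y+t)) - (f1 (y-t) - g1 (y+t))^2) / (f (y-t) - g (y+t))^2)) (at y)"
proof -
  have n1: "f1 (y-t) \<noteq> 0" "g1 (y+t) \<noteq> 0" using neg[of "y-t" "y+t"] by auto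
  have n2: "f (y-t) - g (y+t) \<noteq> 0" using ne[of "y-t" "y+t"] by auto
  have p: "-4 * f1 (y-t) * g1 (y+t) > 0" using neg[of "y-t" "y+t"] by auto
  have sq: "0 < (f (y-t) - g (y+t))^2" using n2 by simp
  define F0 where "F0 = f (y-t)"
  define F1 where "F1 = f1 (y-t)"
  define F2 where "F2 = f2 (y-t)"
  define F3 where "F3 = f3 (y-t)"
  define G0 where "G0 = g (y+t)"
  define G1 where "G1 = g1 (y+t)"
  define G2 where "G2 = g2 (y+t)"
  define G3 where "G3 = g3 (y+t)"
  obtain D where hD: "F0 = D + G0" by (metis diff_add_cancel)
  have nz: "F1 \<noteq> 0" "G1 \<noteq> 0" "D \<noteq> 0" using n1 n2 hD unfolding F0_def F1_def G0_def G1_def by auto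
  show ?thesis
    apply (rule derivative_eq_intros chainD[OF df] chainD[OF df1] chainD[OF df2] chainD[OF dg] chainD[OF dg1] chainD[OF dg2] refl p sq n1 n2)+
    unfolding F0_def[symmetric] F1_def[symmetric] F2_def[symmetric] F3_def[symmetric] G0_def[symmetric] G1_def[symmetric] G2_def[symmetric] G3_def[symmetric] hD
    using nz apply (simp add: power2_eq_square)
    using nz apply (simp add: field_simps)
    done
qed

lemma evalg: fixes N A B e :: real assumes "e \<noteq> 0"
  shows "N / ((A / e) * (B / e)) = e\<^sup>2 * (N / (A * B))"
  using assms by (simp add: power2_eq_square)

lemma limalg: fixes X a b :: real assumes "a \<noteq> 0" "b \<noteq> 0"
  shows "- (X * X) / ((2 * a) * (2 * b)) = X\<^sup>2 / (- 4 * a * b)"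
  using assms by (simp add: power2_eq_square field_simps)

lemma finalg: fixes F0 G0 F1 F2 F3 G1 G2 G3 :: real
  assumes "F1 \<noteq> 0" "G1 \<noteq> 0" "F0 - G0 \<noteq> 0"
  shows "((F3 * F1 - F2^2) / F1^2 + (G3 * G1 - G2^2) / G1^2 + 2 * ((G2 - F2) * (F0 - G0) + (F1 + G1)^2) / (F0 - G0)^2)
       - ((F3 * F1 - F2^2) / F1^2 + (G3 * G1 - G2^2) / G1^2 - 2 * ((F2 - G2) * (F0 - G0) - (F1 - G1)^2) / (F0 - G0)^2)
       = - 2 * (- 4 * F1 * G1 / (F0 - G0)\<^sup>2)"
proof -
  obtain D where hD: "F0 = D + G0" by (metis diff_add_cancel)
  have "D \<noteq> 0" using assms hD by simp
  then show ?thesis unfolding hD using assms by (simp add: field_simps power2_eq_square)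
qed

lemma inj_deriv:
  fixes f f1 :: "real \<Rightarrow> real"
  assumes df: "\<And>x. (f has_real_derivative f1 x) (at x)" and nz: "\<And>x. f1 x \<noteq> 0"
  shows "inj f"
proof (rule injI)
  have *: "f u \<noteq> f v" if uv: "u < v" for u v
  proof -
    have "continuous_on {u..v} f"
      using df DERIV_isCont by (blast intro: continuous_at_imp_continuous_on)
    moreover have "\<And>x. f differentiable (at x)" using df real_differentiable_def by blast
    ultimately obtain l z where "u < z" "z < v" "DERIV f z :> l" "f v - f u = (v - u) * l"
      using MVT[OF uv] by blast
    moreover have "l = f1 z" using DERIV_unique[OF \<open>DERIV f z :> l\<close> df] .
    ultimately show ?thesis using nz[of z] uv by auto
  qed
  fix u v assume "f u = f v"
  then show "u = v" using *[of u v] *[of v u] by (cases u v rule: linorder_cases) auto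
qed

theorem mainTheorem1:
  fixes f g :: "real \<Rightarrow> real" and \<epsilon> :: real
  assumes "smooth_fun f" and "smooth_fun g"
    and "\<And>x y. deriv f x * deriv g y < 0"
    and "\<And>x y. f x \<noteq> g y"
    and "\<epsilon> > 0"
  shows "(\<forall>x t. hfun f g \<epsilon> x (t + \<epsilon>) * hfun f g \<epsilon> x (t - \<epsilon>)
              = (1 + hfun f g \<epsilon> (x + \<epsilon>) t) * (1 + hfun f g \<epsilon> (x - \<epsilon>) t))
    \<and> (let X = (\<lambda>(m::int) (n::int). hfun f g \<epsilon> (of_int m * \<epsilon>) (of_int n * \<epsilon>)) in
        \<forall>m n. X m (n - 1) * X m (n + 1) = (1 + X (m - 1) n) * (1 + X (m + 1) n))
    \<and> (\<exists>L :: real \<Rightarrow> real \<Rightarrow> real.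
          (\<forall>x t. ((\<lambda>e. e\<^sup>2 * hfun f g e x t) \<longlongrightarrow> L x t) (at_right 0))
        \<and> (\<forall>x t. L x t > 0)
        \<and> (let \<phi> = (\<lambda>x t. ln (1 / L x t)) in
             (\<forall>x t. exp (\<phi> x t) = - 4 * deriv f (x - t) * deriv g (x + t) / (f (x - t) - g (x + t))\<^sup>2)
           \<and> (\<forall>x t. (\<lambda>s. \<phi> x s) differentiable (at t) \<and> (\<lambda>y. \<phi> y t) differentiable (at x)
                  \<and> (\<lambda>s. deriv (\<lambda>s'. \<phi> x s') s) differentiable (at t)
                  \<and> (\<lambda>y. deriv (\<lambda>y'. \<phi> y' t) y) differentiable (at x)
                  \<and> deriv (\<lambda>s. deriv (\<lambda>s'. \<phi> x s') s) t - deriv (\<lambda>y. deriv (\<lambda>y'. \<phi> y' t) y) x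
                      = - 2 * exp (\<phi> x t))))"
proof -
  have sm: "\<And>n x. ((deriv ^^ n) F) differentiable (at x)" if "smooth_fun F" for F
    using that unfolding smooth_fun_def by blast
  have dd: "\<And>x. (F has_real_derivative deriv F x) (at x)"
    "\<And>x. (deriv F has_real_derivative deriv (deriv F) x) (at x)"
    "\<And>x. (deriv (deriv F) has_real_derivative deriv (deriv (deriv F)) x) (at x)"
    if "smooth_fun F" for F
    using sm[OF that, of 0] sm[OF that, of 1] sm[OF that, of 2]
    by (auto simp: DERIV_deriv_iff_real_differentiable numeral_2_eq_2)
  note df = dd[OF assms(1)] and dg = dd[OF assms(2)]
  note neg = assms(3) and ne = assms(4)
  have f1nz: "\<And>x. deriv f x \<noteq> 0" and g1nz: "\<And>x. deriv g x \<noteq> 0"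
    using neg[of _ 0] neg[of 0] by (metis mult_eq_0_iff less_irrefl)+
  have injf: "inj f" by (rule inj_deriv[OF df(1) f1nz])
  have injg: "inj g" by (rule inj_deriv[OF dg(1) g1nz])
  have P1: "\<forall>x t. hfun f g \<epsilon> x (t + \<epsilon>) * hfun f g \<epsilon> x (t - \<epsilon>)
              = (1 + hfun f g \<epsilon> (x + \<epsilon>) t) * (1 + hfun f g \<epsilon> (x - \<epsilon>) t)"
    using part1[OF injf injg assms(5)] by blast
  have P2: "let X = (\<lambda>(m::int) (n::int). hfun f g \<epsilon> (of_int m * \<epsilon>) (of_int n * \<epsilon>)) in
        \<forall>m n. X m (n - 1) * X m (n + 1) = (1 + X (m - 1) n) * (1 + X (m + 1) n)"
    unfolding Let_def
  proof (intro allI)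
    fix m n :: int
    have e: "of_int (n - 1) * \<epsilon> = of_int n * \<epsilon> - \<epsilon>" "of_int (n + 1) * \<epsilon> = of_int n * \<epsilon> + \<epsilon>"
      "of_int (m - 1) * \<epsilon> = of_int m * \<epsilon> - \<epsilon>" "of_int (m + 1) * \<epsilon> = of_int m * \<epsilon> + \<epsilon>"
      by (simp_all add: algebra_simps)
    show "hfun f g \<epsilon> (of_int m * \<epsilon>) (of_int (n - 1) * \<epsilon>) * hfun f g \<epsilon> (of_int m * \<epsilon>) (of_int (n + 1) * \<epsilon>) =
         (1 + hfun f g \<epsilon> (of_int (m - 1) * \<epsilon>) (of_int n * \<epsilon>)) * (1 + hfun f g \<epsilon> (of_int (m + 1) * \<epsilon>) (of_int n * \<epsilon>))"
      unfolding e using P1[rule_format, of "of_int m * \<epsilon>" "of_int n * \<epsilon>"] by (simp add: mult.commute)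
  qed
  define L where "L = (\<lambda>x t. (f (x - t) - g (x + t))^2 / (- 4 * deriv f (x - t) * deriv g (x + t)))"
  have pos4: "\<And>x t. - 4 * deriv f (x - t) * deriv g (x + t) > 0"
    using neg by (simp add: mult.assoc)
  have sqpos: "\<And>x t. (f (x - t) - g (x + t))^2 > 0" using ne by simp
  have Lpos: "\<forall>x t. L x t > 0"
  proof (intro allI)
    fix x t show "L x t > 0" unfolding L_def by (rule divide_pos_pos[OF sqpos pos4])
  qed
  have Llim: "((\<lambda>e. e\<^sup>2 * hfun f g e x t) \<longlongrightarrow> L x t) (at_right 0)" for x t
  proof -
    have cf: "\<And>x. isCont f x" and cg: "\<And>x. isCont g x" using df(1) dg(1) DERIV_isCont by blast+
    have c: "((\<lambda>e. F (y + e)) \<longlongrightarrow> F y) (at_right 0)" "((\<lambda>e. F (y - e)) \<longlongrightarrow> F y) (at_right 0)"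
      if "\<And>x. isCont F x" for F :: "real \<Rightarrow> real" and y
    proof -
      have "((\<lambda>e. y + e) \<longlongrightarrow> y + 0) (at_right 0)" "((\<lambda>e. y - e) \<longlongrightarrow> y - 0) (at_right 0)"
        by (intro tendsto_intros)+
      then have l: "((\<lambda>e. y + e) \<longlongrightarrow> y) (at_right 0)" "((\<lambda>e. y - e) \<longlongrightarrow> y) (at_right 0)"
        by simp_all
      show "((\<lambda>e. F (y + e)) \<longlongrightarrow> F y) (at_right 0)" by (rule isCont_tendsto_compose[OF that l(1)])
      show "((\<lambda>e. F (y - e)) \<longlongrightarrow> F y) (at_right 0)" by (rule isCont_tendsto_compose[OF that l(2)])
    qed
    have N: "((\<lambda>e. - ((f (x - t + e) - g (x + t + e)) * (f (x - t - e) - g (x + t - e)))) \<longlongrightarrow>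
         - ((f (x - t) - g (x + t)) * (f (x - t) - g (x + t)))) (at_right 0)"
      by (intro tendsto_intros c[OF cf] c[OF cg])
    have D: "((\<lambda>e. ((f (x - t + e) - f (x - t - e)) / e) * ((g (x + t + e) - g (x + t - e)) / e)) \<longlongrightarrow>
         (2 * deriv f (x - t)) * (2 * deriv g (x + t))) (at_right 0)"
      by (intro tendsto_mult symquot df(1) dg(1))
    have nzD: "(2 * deriv f (x - t)) * (2 * deriv g (x + t)) \<noteq> 0" using f1nz g1nz by simp
    have lim: "((\<lambda>e. - ((f (x - t + e) - g (x + t + e)) * (f (x - t - e) - g (x + t - e))) /
        (((f (x - t + e) - f (x - t - e)) / e) * ((g (x + t + e) - g (x + t - e)) / e))) \<longlongrightarrow> L x t) (at_right 0)"
    proof -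
      have "L x t = - ((f (x - t) - g (x + t)) * (f (x - t) - g (x + t))) / ((2 * deriv f (x - t)) * (2 * deriv g (x + t)))"
        unfolding L_def using limalg[OF f1nz g1nz] by simp
      then show ?thesis using tendsto_divide[OF N D nzD] by simp
    qed
    have ev: "\<forall>\<^sub>F e in at_right 0. - ((f (x - t + e) - g (x + t + e)) * (f (x - t - e) - g (x + t - e))) /
        (((f (x - t + e) - f (x - t - e)) / e) * ((g (x + t + e) - g (x + t - e)) / e)) = e\<^sup>2 * hfun f g e x t"
    proof (rule eventually_mono[OF eventually_at_right_less])
      fix e :: real assume "0 < e"
      show "- ((f (x - t + e) - g (x + t + e)) * (f (x - t - e) - g (x + t - e))) /
        (((f (x - t + e) - f (x - t - e)) / e) * ((g (x + t + e) - g (x + t - e)) / e)) = e\<^sup>2 * hfun f g e x t"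
        using \<open>0 < e\<close> unfolding hfun_def by (intro evalg) simp
    qed
    show ?thesis using lim tendsto_cong[OF ev] by simp
  qed
  define \<Phi> where "\<Phi> = (\<lambda>x t. ln (-4 * deriv f (x-t) * deriv g (x+t)) - ln ((f (x-t) - g (x+t))^2))"
  have phieq: "ln (1 / L x t) = \<Phi> x t" for x t
  proof -
    have h: "1 / L x t = (-4 * deriv f (x-t) * deriv g (x+t)) / (f (x-t) - g (x+t))^2"
      unfolding L_def by simp
    show ?thesis unfolding \<Phi>_def h using pos4[of x t] sqpos[of x t] by (subst ln_div) auto
  qed
  have expeq: "exp (ln (1 / L x t)) = - 4 * deriv f (x - t) * deriv g (x + t) / (f (x - t) - g (x + t))\<^sup>2" for x t
  proof -
    have "1 / L x t > 0" using Lpos by simp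
    then have "exp (ln (1 / L x t)) = 1 / L x t" by simp
    also have "\<dots> = - 4 * deriv f (x - t) * deriv g (x + t) / (f (x - t) - g (x + t))\<^sup>2"
      unfolding L_def by simp
    finally show ?thesis .
  qed
  define Pt where "Pt = (\<lambda>x s. - deriv (deriv f) (x-s) / deriv f (x-s) + deriv (deriv g) (x+s) / deriv g (x+s)
     + 2 * (deriv f (x-s) + deriv g (x+s)) / (f (x-s) - g (x+s)))"
  define Px where "Px = (\<lambda>t y. deriv (deriv f) (y-t) / deriv f (y-t) + deriv (deriv g) (y+t) / deriv g (y+t)
     - 2 * (deriv f (y-t) - deriv g (y+t)) / (f (y-t) - g (y+t)))"
  have DPt: "((\<lambda>s. \<Phi> x s) has_real_derivative Pt x s) (at s)" for x s
    unfolding \<Phi>_def Pt_def by (rule pde_t[OF df dg neg ne])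
  have DPx: "((\<lambda>y. \<Phi> y t) has_real_derivative Px t y) (at y)" for t y
    unfolding \<Phi>_def Px_def by (rule pde_x[OF df dg neg ne])
  have DPtt: "((\<lambda>s. Pt x s) has_real_derivative
      ((deriv (deriv (deriv f)) (x-s) * deriv f (x-s) - deriv (deriv f) (x-s)^2) / deriv f (x-s)^2
        + (deriv (deriv (deriv g)) (x+s) * deriv g (x+s) - deriv (deriv g) (x+s)^2) / deriv g (x+s)^2
        + 2 * ((deriv (deriv g) (x+s) - deriv (deriv f) (x-s)) * (f (x-s) - g (x+s)) + (deriv f (x-s) + deriv g (x+s))^2) / (f (x-s) - g (x+s))^2)) (at s)" for x s
    unfolding Pt_def by (rule pde_tt[OF df dg neg ne])
  have DPxx: "((\<lambda>y. Px t y) has_real_derivative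
      ((deriv (deriv (deriv f)) (y-t) * deriv f (y-t) - deriv (deriv f) (y-t)^2) / deriv f (y-t)^2
        + (deriv (deriv (deriv g)) (y+t) * deriv g (y+t) - deriv (deriv g) (y+t)^2) / deriv g (y+t)^2
        - 2 * ((deriv (deriv f) (y-t) - deriv (deriv g) (y+t)) * (f (y-t) - g (y+t)) - (deriv f (y-t) - deriv g (y+t))^2) / (f (y-t) - g (y+t))^2)) (at y)" for t y
    unfolding Px_def by (rule pde_xx[OF df dg neg ne])
  have dPt: "deriv (\<lambda>s. \<Phi> x s) = Pt x" for x
    by (rule ext, rule DERIV_imp_deriv[OF DPt])
  have dPx: "deriv (\<lambda>y. \<Phi> y t) = Px t" for t
    by (rule ext, rule DERIV_imp_deriv[OF DPx])
  have fin: "deriv (Pt x) t - deriv (Px t) x = - 2 * exp (\<Phi> x t)" for x t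
  proof -
    have e1: "exp (\<Phi> x t) = - 4 * deriv f (x - t) * deriv g (x + t) / (f (x - t) - g (x + t))\<^sup>2"
      using expeq[of x t] phieq[of x t] by simp
    have n2: "f (x-t) - g (x+t) \<noteq> 0" using ne by auto
    have 1: "deriv (Pt x) t = ((deriv (deriv (deriv f)) (x-t) * deriv f (x-t) - deriv (deriv f) (x-t)^2) / deriv f (x-t)^2
        + (deriv (deriv (deriv g)) (x+t) * deriv g (x+t) - deriv (deriv g) (x+t)^2) / deriv g (x+t)^2
        + 2 * ((deriv (deriv g) (x+t) - deriv (deriv f) (x-t)) * (f (x-t) - g (x+t)) + (deriv f (x-t) + deriv g (x+t))^2) / (f (x-t) - g (x+t))^2)"
      by (rule DERIV_imp_deriv[OF DPtt])
    have 2: "deriv (Px t) x = ((deriv (deriv (deriv f)) (x-t) * deriv f (x-t) - deriv (deriv f) (x-t)^2) / deriv f (x-t)^2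
        + (deriv (deriv (deriv g)) (x+t) * deriv g (x+t) - deriv (deriv g) (x+t)^2) / deriv g (x+t)^2
        - 2 * ((deriv (deriv f) (x-t) - deriv (deriv g) (x+t)) * (f (x-t) - g (x+t)) - (deriv f (x-t) - deriv g (x+t))^2) / (f (x-t) - g (x+t))^2)"
      by (rule DERIV_imp_deriv[OF DPxx])
    show ?thesis unfolding 1 2 e1 by (rule finalg[OF f1nz g1nz n2])
  qed
  have P3: "let \<phi> = (\<lambda>x t. ln (1 / L x t)) in
             (\<forall>x t. exp (\<phi> x t) = - 4 * deriv f (x - t) * deriv g (x + t) / (f (x - t) - g (x + t))\<^sup>2)
           \<and> (\<forall>x t. (\<lambda>s. \<phi> x s) differentiable (at t) \<and> (\<lambda>y. \<phi> y t) differentiable (at x)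
                  \<and> (\<lambda>s. deriv (\<lambda>s'. \<phi> x s') s) differentiable (at t)
                  \<and> (\<lambda>y. deriv (\<lambda>y'. \<phi> y' t) y) differentiable (at x)
                  \<and> deriv (\<lambda>s. deriv (\<lambda>s'. \<phi> x s') s) t - deriv (\<lambda>y. deriv (\<lambda>y'. \<phi> y' t) y) x
                      = - 2 * exp (\<phi> x t))"
    unfolding Let_def phieq
  proof (intro conjI allI)
    fix x t
    show "exp (\<Phi> x t) = - 4 * deriv f (x - t) * deriv g (x + t) / (f (x - t) - g (x + t))\<^sup>2"
      using expeq[of x t] phieq[of x t] by simp
  next
    fix x t
    show "(\<lambda>s. \<Phi> x s) differentiable (at t)" using DPt real_differentiable_def by blast
  next
    fix x t
    show "(\<lambda>y. \<Phi> y t) differentiable (at x)" using DPx real_differentiable_def by blast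
  next
    fix x t
    show "(\<lambda>s. deriv (\<lambda>s'. \<Phi> x s') s) differentiable (at t)"
      unfolding dPt using DPtt real_differentiable_def by blast
  next
    fix x t
    show "(\<lambda>y. deriv (\<lambda>y'. \<Phi> y' t) y) differentiable (at x)"
      unfolding dPx using DPxx real_differentiable_def by blast
  next
    fix x t
    show "deriv (\<lambda>s. deriv (\<lambda>s'. \<Phi> x s') s) t - deriv (\<lambda>y. deriv (\<lambda>y'. \<Phi> y' t) y) x
                      = - 2 * exp (\<Phi> x t)"
      unfolding dPt dPx by (rule fin)
  qed
  show ?thesis
    apply (intro conjI)
       apply (rule P1)
      apply (rule P2)
    apply (rule exI[of _ L])
    apply (intro conjI allI)
      apply (rule Llim)
     apply (rule Lpos[rule_format])
    apply (rule P3)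
    done
qed

end
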